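(* Let $\mu\in\mathbb F_q\setminus\{0\}$. Any family of pairwise disjoint generators of $\mathcal Q_\mu$ that are totally isotropic with respect to $\perp_0$ has at most $q+1$ members.
   Context: Let $q$ be an even prime power and $n\ge 2$ an integer. Let $\mathrm{PG}(2n+1,q)$ have homogeneous coordinates $(X_1,\dots,X_{2n+2})$. Fix $\delta\in\mathbb F_q$ such that $X^2+X+\delta$ is irreducible over $\mathbb F_q$. For $\mu\in\mathbb F_q$ let $\mathcal Q_\mu$ be the elliptic quadric $X_1^2+X_1X_{2n+2}+\delta X_{2n+2}^2+\sum_{i=2}^{n+1}X_iX_{2n+3-i}+\mu(X_{2n}^2+X_{2n}X_{2n+1}+\delta X_{2n+1}^2)=0$, whose generators are $(n-1)$-spaces. Let $\perp_0$ be the symplectic polarity defined by the alternating form $B_0(X,Y)=\sum_{i=1}^{2n+2}X_iY_{2n+3-i}$. *)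

theory Defs
  imports Main "HOL-Library.Function_Algebras" "HOL-Computational_Algebra.Polynomial"
begin

text \<open>Vectors of F_q^(2n+2) are functions nat => 'a with coordinates X_1..X_(2n+2),
  i.e. support contained in {1..2n+2}.\<close>

definition scv :: "'a::field \<Rightarrow> (nat \<Rightarrow> 'a) \<Rightarrow> (nat \<Rightarrow> 'a)" where
  "scv c v = (\<lambda>i. c * v i)"

definition ambient :: "nat \<Rightarrow> (nat \<Rightarrow> 'a::field) set" where
  "ambient n = {v. \<forall>i. i \<notin> {1..2*n+2} \<longrightarrow> v i = 0}"

definition Qform :: "nat \<Rightarrow> 'a::field \<Rightarrow> 'a \<Rightarrow> (nat \<Rightarrow> 'a) \<Rightarrow> 'a" where
  "Qform n \<delta> \<mu> X =
     X 1 ^ 2 + X 1 * X (2*n+2) + \<delta> * X (2*n+2) ^ 2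
     + (\<Sum>i=2..n+1. X i * X (2*n+3-i))
     + \<mu> * (X (2*n) ^ 2 + X (2*n) * X (2*n+1) + \<delta> * X (2*n+1) ^ 2)"

definition B0 :: "nat \<Rightarrow> (nat \<Rightarrow> 'a::field) \<Rightarrow> (nat \<Rightarrow> 'a) \<Rightarrow> 'a" where
  "B0 n X Y = (\<Sum>i=1..2*n+2. X i * Y (2*n+3-i))"

text \<open>A projective (k-1)-space of PG(2n+1,q), as a k-dimensional vector subspace.\<close>
definition proj_subspace :: "nat \<Rightarrow> nat \<Rightarrow> (nat \<Rightarrow> 'a::field) set \<Rightarrow> bool" where
  "proj_subspace n k W \<longleftrightarrow> W \<subseteq> ambient n \<and> module.subspace scv W \<and> vector_space.dim scv W = k"

definition generator :: "nat \<Rightarrow> 'a::field \<Rightarrow> 'a \<Rightarrow> (nat \<Rightarrow> 'a) set \<Rightarrow> bool" where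
  "generator n \<delta> \<mu> W \<longleftrightarrow> proj_subspace n n W \<and> (\<forall>v\<in>W. Qform n \<delta> \<mu> v = 0)"

definition totally_isotropic_B0 :: "nat \<Rightarrow> (nat \<Rightarrow> 'a::field) set \<Rightarrow> bool" where
  "totally_isotropic_B0 n W \<longleftrightarrow> (\<forall>x\<in>W. \<forall>y\<in>W. B0 n x y = 0)"

end

theory Submission
  imports Defs "HOL-Library.FuncSet"
begin

lemma even_card_involution:
  fixes g :: "'b \<Rightarrow> 'b"
  shows "finite S \<Longrightarrow> (\<forall>x\<in>S. g x \<in> S \<and> g (g x) = x \<and> g x \<noteq> x) \<Longrightarrow> even (card S)"
proof (induction "card S" arbitrary: S rule: less_induct)
  case less
  show ?case
  proof (cases "S = {}")
    case True then show ?thesis by simp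
  next
    case False
    then obtain x where x: "x \<in> S" by blast
    let ?S' = "S - {x, g x}"
    have gx: "g x \<in> S" "g x \<noteq> x" using less.prems x by auto
    have sub: "{x, g x} \<subseteq> S" using x gx by auto
    have c2: "card {x, g x} = 2" using gx by simp
    have "card ?S' = card S - 2"
      using card_Diff_subset[OF _ sub] less.prems(1) c2 by simp
    moreover have "card S \<ge> 2" using card_mono[OF less.prems(1) sub] c2 by simp
    ultimately have cS: "card S = card ?S' + 2" by simp
    have "even (card ?S')"
    proof (rule less.hyps)
      show "card ?S' < card S" using cS by simp
      show "finite ?S'" using less.prems by simp
      show "\<forall>y\<in>?S'. g y \<in> ?S' \<and> g (g y) = y \<and> g y \<noteq> y"
        using less.prems x by (metis (no_types, lifting) Diff_iff insert_iff singletonD)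
    qed
    then show ?thesis using cS by simp
  qed
qed

lemma char2:
  assumes "even (card (UNIV :: 'a::{finite,field} set))"
  shows "(1::'a) + 1 = 0"
proof (rule ccontr)
  assume h: "(1::'a) + 1 \<noteq> 0"
  have "even (card (UNIV - {0::'a}))"
  proof (rule even_card_involution[where g=uminus])
    show "finite (UNIV - {0::'a})" by simp
    show "\<forall>x\<in>UNIV - {0::'a}. - x \<in> UNIV - {0} \<and> - (- x) = x \<and> - x \<noteq> x"
    proof
      fix x :: 'a assume "x \<in> UNIV - {0}"
      then have x: "x \<noteq> 0" by simp
      have "- x \<noteq> x"
      proof
        assume mx: "- x = x"
        have "x + x = 0" using mx by (metis add.right_inverse)
        then have "(1 + 1) * x = 0" by (simp only: distrib_right mult_1_left)
        then show False using h x by simp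
      qed
      then show "- x \<in> UNIV - {0} \<and> - (- x) = x \<and> - x \<noteq> x" using x by simp
    qed
  qed
  moreover have "card (UNIV :: 'a set) = card (UNIV - {0::'a}) + 1"
  proof -
    have "card (UNIV - {0::'a}) = card (UNIV :: 'a set) - 1" by (rule card_Diff_singleton) simp
    moreover have "card (UNIV :: 'a set) > 0" by (rule finite_UNIV_card_ge_0) simp
    ultimately show ?thesis by linarith
  qed
  ultimately show False using assms by (metis even_plus_one_iff)
qed

lemma aniso:
  fixes \<delta> :: "'a::field"
  assumes irr: "irreducible [:\<delta>, 1, 1:]"
  shows "a^2 + a*b + \<delta>*b^2 = 0 \<Longrightarrow> a = 0 \<and> b = 0"
proof -
  assume e: "a^2 + a*b + \<delta>*b^2 = 0"
  show "a = 0 \<and> b = 0"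
  proof (cases "b = 0")
    case True then show ?thesis using e by simp
  next
    case False
    define r where "r = a / b"
    have "r^2 + r + \<delta> = (a^2 + a*b + \<delta>*b^2) / b^2"
      using False by (simp add: r_def field_simps power2_eq_square)
    then have root: "poly [:\<delta>, 1, 1:] r = 0" using e by (simp add: algebra_simps power2_eq_square)
    then have "[:-r, 1:] dvd [:\<delta>, 1, 1:]" using poly_eq_0_iff_dvd by blast
    then obtain c where c: "[:\<delta>, 1, 1:] = [:-r, 1:] * c" by (auto elim: dvdE)
    have "is_unit [:-r, 1:] \<or> is_unit c" using irreducibleD[OF irr c] .
    moreover have "\<not> is_unit [:-r, 1:]" by (simp add: is_unit_iff_degree)
    moreover have "\<not> is_unit c"
    proof
      assume "is_unit c"
      moreover have "c \<noteq> 0" using c by auto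
      ultimately have "degree c = 0" by (simp add: is_unit_iff_degree)
      have "degree ([:-r, 1:] * c) = degree [:-r, 1:] + degree c"
        by (rule degree_mult_eq) (use \<open>c \<noteq> 0\<close> in auto)
      with \<open>degree c = 0\<close> have "degree [:\<delta>, 1, 1:] = 1" unfolding c by simp
      then show False by simp
    qed
    ultimately show ?thesis by blast
  qed
qed

lemma fiber_bound:
  fixes T :: "'b::ab_group_add set" and f :: "'b \<Rightarrow> 'c::ab_group_add"
  assumes fin: "finite T" and cl: "\<forall>x\<in>T. \<forall>y\<in>T. x - y \<in> T"
    and add: "\<forall>x\<in>T. \<forall>y\<in>T. f (x - y) = f x - f y"
  shows "card T \<le> card (f ` T) * card {x\<in>T. f x = 0}"
proof -
  have eq: "T = (\<Union>y\<in>f ` T. {x\<in>T. f x = y})" by blast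
  have "card T \<le> (\<Sum>y\<in>f ` T. card {x\<in>T. f x = y})"
    by (subst eq) (rule card_UN_le, rule finite_imageI, rule fin)
  also have "\<dots> \<le> (\<Sum>y\<in>f ` T. card {x\<in>T. f x = 0})"
  proof (rule sum_mono)
    fix y assume "y \<in> f ` T"
    then obtain x0 where x0: "x0 \<in> T" "f x0 = y" by blast
    have inj: "inj_on (\<lambda>x. x - x0) {x\<in>T. f x = y}" by (rule inj_onI) simp
    have sub: "(\<lambda>x. x - x0) ` {x\<in>T. f x = y} \<subseteq> {x\<in>T. f x = 0}"
    proof
      fix z assume "z \<in> (\<lambda>x. x - x0) ` {x\<in>T. f x = y}"
      then obtain x where x: "x \<in> T" "f x = y" "z = x - x0" by blast
      have "z \<in> T" using cl x x0 by blast
      moreover have "f z = 0" using add x x0 by simp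
      ultimately show "z \<in> {x\<in>T. f x = 0}" by blast
    qed
    have "finite {x\<in>T. f x = 0}" using fin by simp
    then show "card {x\<in>T. f x = y} \<le> card {x\<in>T. f x = 0}"
      using card_inj_on_le[OF inj sub] by blast
  qed
  also have "\<dots> = card (f ` T) * card {x\<in>T. f x = 0}" by simp
  finally show ?thesis .
qed

definition Qe :: "'a::field \<Rightarrow> nat \<Rightarrow> (nat \<Rightarrow> 'a) \<Rightarrow> 'a" where
  "Qe \<delta> m x = x 0 ^ 2 + x 0 * x 1 + \<delta> * x 1 ^ 2 + (\<Sum>i<m. x (2*i+2) * x (2*i+3))"

lemma card_img_le: fixes f :: "'b \<Rightarrow> 'a::finite" shows "card (f ` T) \<le> card (UNIV :: 'a set)"
  by (rule card_mono) auto

lemma filt_closed: "\<forall>x\<in>T. \<forall>y\<in>T. x - y \<in> T \<Longrightarrow>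
  \<forall>x\<in>{x\<in>T. x k = (0::'a::ab_group_add)}. \<forall>y\<in>{x\<in>T. x k = 0}. x - y \<in> {x\<in>T. x k = 0}"
proof (intro ballI)
  fix x y assume c: "\<forall>x\<in>T. \<forall>y\<in>T. x - y \<in> T" and x: "x \<in> {x\<in>T. x k = 0}" and y: "y \<in> {x\<in>T. x k = 0}"
  have "x - y \<in> T" using c x y by blast
  moreover have "(x - y) k = 0" using x y by simp
  ultimately show "x - y \<in> {x\<in>T. x k = 0}" by blast
qed

lemma ell_bound:
  fixes \<delta> :: "'a::{finite,field}"
  assumes an: "\<And>a b. a^2 + a*b + \<delta>*b^2 = 0 \<Longrightarrow> a = 0 \<and> b = 0"
  shows "finite T \<Longrightarrow> (\<forall>x\<in>T. \<forall>y\<in>T. x - y \<in> T) \<Longrightarrow> (\<forall>x\<in>T. \<forall>j\<ge>2*m+2. x j = 0)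
    \<Longrightarrow> (\<forall>x\<in>T. Qe \<delta> m x = 0) \<Longrightarrow> card T \<le> card (UNIV :: 'a set)^m"
proof (induction m arbitrary: T)
  case 0
  have "T \<subseteq> {0}"
  proof
    fix x assume x: "x \<in> T"
    have "Qe \<delta> 0 x = 0" using 0(4) x by blast
    then have "x 0 ^ 2 + x 0 * x 1 + \<delta> * x 1 ^ 2 = 0" by (simp add: Qe_def)
    then have x01: "x 0 = 0 \<and> x 1 = 0" by (rule an)
    have x2: "\<forall>j\<ge>2. x j = 0" using 0(3) x by simp
    have "x = 0"
    proof
      fix j
      show "x j = 0 j"
      proof (cases "j < 2")
        case True then have "j = 0 \<or> j = 1" by linarith
        then show ?thesis using x01 by auto
      next
        case False then show ?thesis using x2 by simp
      qed
    qed
    then show "x \<in> {0}" by simp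
  qed
  then have "card T \<le> card {0::nat \<Rightarrow> 'a}" by (rule card_mono[rotated]) simp
  then show ?case by simp
next
  case (Suc m T)
  let ?k = "2*m+2" and ?k' = "2*m+3"
  have QeS: "Qe \<delta> (Suc m) x = Qe \<delta> m x + x ?k * x ?k'" for x
    by (simp add: Qe_def algebra_simps)
  show ?case
  proof (cases "\<forall>x\<in>T. x ?k = 0")
    case True
    define T0 where "T0 = {x\<in>T. x ?k' = 0}"
    have "card T \<le> card ((\<lambda>x. x ?k') ` T) * card T0"
      unfolding T0_def by (rule fiber_bound) (use Suc.prems in \<open>blast, blast, simp\<close>)
    also have "\<dots> \<le> card (UNIV :: 'a set) * card T0" by (rule mult_right_mono) (rule card_img_le, simp)
    also have "card T0 \<le> card (UNIV :: 'a set)^m"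
    proof (rule Suc.IH)
      show "finite T0" using Suc.prems unfolding T0_def by simp
      show "\<forall>x\<in>T0. \<forall>y\<in>T0. x - y \<in> T0" unfolding T0_def by (rule filt_closed[OF Suc.prems(2)])
      show "\<forall>x\<in>T0. \<forall>j\<ge>2*m+2. x j = 0"
      proof (intro ballI allI impI)
        fix x j assume x: "x \<in> T0" and j: "2*m+2 \<le> j"
        consider "j = ?k" | "j = ?k'" | "j \<ge> 2 * Suc m + 2" using j by atomize_elim presburger
        then show "x j = 0" using x True Suc.prems(3) unfolding T0_def by cases auto
      qed
      show "\<forall>x\<in>T0. Qe \<delta> m x = 0" using Suc.prems(4) True unfolding T0_def by (auto simp: QeS)
    qed
    then have "card (UNIV :: 'a set) * card T0 \<le> card (UNIV :: 'a set) * card (UNIV :: 'a set)^m" by simp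
    finally show ?thesis by simp
  next
    case False
    then obtain xs where xs: "xs \<in> T" "xs ?k \<noteq> 0" by blast
    define T0 where "T0 = {x\<in>T. x ?k = 0}"
    define dr where "dr x = x(?k' := 0)" for x :: "nat \<Rightarrow> 'a"
    have "card T \<le> card ((\<lambda>x. x ?k) ` T) * card T0"
      unfolding T0_def by (rule fiber_bound) (use Suc.prems in \<open>blast, blast, simp\<close>)
    also have "\<dots> \<le> card (UNIV :: 'a set) * card T0" by (rule mult_right_mono) (rule card_img_le, simp)
    also have "card T0 = card (dr ` T0)"
    proof -
      have "inj_on dr T0"
      proof (rule inj_onI)
        fix x y assume x: "x \<in> T0" and y: "y \<in> T0" and e: "dr x = dr y"
        define d where "d = x - y"
        have dT: "d \<in> T" using x y Suc.prems(2) unfolding d_def T0_def by blast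
        have dz: "d j = 0" if "j \<noteq> ?k'" for j
          using fun_cong[OF e, of j] that unfolding d_def dr_def by simp
        have zT: "0 \<in> T" using Suc.prems(2) xs(1) by (metis diff_self)
        have mdT: "- d \<in> T" using Suc.prems(2) zT dT by (metis diff_0)
        have sT: "xs + d \<in> T" using Suc.prems(2) xs(1) mdT by (metis diff_minus_eq_add)
        have "Qe \<delta> (Suc m) (xs + d) = Qe \<delta> (Suc m) xs + xs ?k * d ?k'"
        proof -
          have "(\<Sum>i<m. (xs + d) (2*i+2) * (xs + d) (2*i+3)) = (\<Sum>i<m. xs (2*i+2) * xs (2*i+3))"
            by (rule sum.cong) (auto simp: dz)
          then show ?thesis unfolding QeS by (simp add: Qe_def dz algebra_simps)
        qed
        then have "xs ?k * d ?k' = 0" using Suc.prems(4) sT xs(1) by simp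
        then have "d ?k' = 0" using xs(2) by simp
        then have "d = 0" using dz by (intro ext) (metis zero_fun_apply)
        then show "x = y" unfolding d_def by simp
      qed
      then show ?thesis by (simp add: card_image)
    qed
    also have "card (dr ` T0) \<le> card (UNIV :: 'a set)^m"
    proof (rule Suc.IH)
      show "finite (dr ` T0)" using Suc.prems unfolding T0_def by simp
      show "\<forall>x\<in>dr ` T0. \<forall>y\<in>dr ` T0. x - y \<in> dr ` T0"
      proof (clarify)
        fix x y assume "x \<in> T0" "y \<in> T0"
        then have "x - y \<in> T0" using filt_closed[OF Suc.prems(2)] unfolding T0_def by blast
        moreover have "dr x - dr y = dr (x - y)" unfolding dr_def by auto
        ultimately show "dr x - dr y \<in> dr ` T0" by simp
      qed
      show "\<forall>x\<in>dr ` T0. \<forall>j\<ge>2*m+2. x j = 0"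
      proof (clarify)
        fix x j assume x: "x \<in> T0" and j: "2*m+2 \<le> j"
        consider "j = ?k" | "j = ?k'" | "j \<ge> 2 * Suc m + 2" using j by atomize_elim presburger
        then show "dr x j = 0" using x Suc.prems(3) unfolding T0_def dr_def by cases auto
      qed
      show "\<forall>x\<in>dr ` T0. Qe \<delta> m x = 0"
      proof (clarify)
        fix x assume x: "x \<in> T0"
        have "Qe \<delta> m (dr x) = Qe \<delta> m x"
          unfolding Qe_def dr_def by (auto intro!: sum.cong)
        also have "\<dots> = Qe \<delta> (Suc m) x" using x unfolding QeS T0_def by simp
        finally show "Qe \<delta> m (dr x) = 0" using x Suc.prems(4) unfolding T0_def by simp
      qed
    qed
    then have "card (UNIV :: 'a set) * card (dr ` T0) \<le> card (UNIV :: 'a set) * card (UNIV :: 'a set)^m" by simp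
    finally show ?thesis by simp
  qed
qed

lemma vs_scv: "vector_space (scv :: 'a::field \<Rightarrow> (nat \<Rightarrow> 'a) \<Rightarrow> (nat \<Rightarrow> 'a))"
  unfolding vector_space_def scv_def by (simp add: fun_eq_iff distrib_left distrib_right mult.assoc)

lemma mod_scv: "module (scv :: 'a::field \<Rightarrow> (nat \<Rightarrow> 'a) \<Rightarrow> (nat \<Rightarrow> 'a))"
  using vs_scv by (simp add: module_iff_vector_space)

lemma finite_ambient: "finite (ambient n :: (nat \<Rightarrow> 'a::{finite,field}) set)"
proof -
  have "ambient n \<subseteq> {f. \<forall>x. (x \<in> {1..2*n+2} \<longrightarrow> f x \<in> (UNIV::'a set)) \<and> (x \<notin> {1..2*n+2} \<longrightarrow> f x = 0)}"
    unfolding ambient_def by auto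
  moreover have "finite {f. \<forall>x. (x \<in> {1..2*n+2} \<longrightarrow> f x \<in> (UNIV::'a set)) \<and> (x \<notin> {1..2*n+2} \<longrightarrow> f x = 0)}"
    by (rule finite_set_of_finite_funs) auto
  ultimately show ?thesis by (rule finite_subset)
qed

lemma scv_diff: "scv (a - b) v = scv a v - scv b v"
  unfolding scv_def by (simp add: fun_eq_iff left_diff_distrib)

lemma lowcard:
  fixes W :: "(nat \<Rightarrow> 'a::{finite,field}) set"
  assumes sub: "module.subspace scv W" and fin: "finite W"
  shows "card (UNIV::'a set) ^ vector_space.dim scv W \<le> card W"
proof -
  obtain B where B: "B \<subseteq> W" "\<not> module.dependent scv B" "W \<subseteq> module.span scv B"
      "card B = vector_space.dim scv W"
    by (rule vector_space.basis_exists[OF vs_scv, of W])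
  have finB: "finite B" using B(1) fin by (rule finite_subset)
  define \<phi> where "\<phi> c = (\<Sum>b\<in>B. scv (c b) b)" for c :: "(nat \<Rightarrow> 'a) \<Rightarrow> 'a"
  let ?P = "PiE B (\<lambda>_. UNIV :: 'a set)"
  have cardP: "card ?P = card (UNIV::'a set) ^ card B"
    using finB by (simp add: card_PiE)
  have inj: "inj_on \<phi> ?P"
  proof (rule inj_onI)
    fix c c' assume c: "c \<in> ?P" and c': "c' \<in> ?P" and e: "\<phi> c = \<phi> c'"
    have "(\<Sum>b\<in>B. scv (c b - c' b) b) = (\<Sum>b\<in>B. scv (c b) b - scv (c' b) b)"
      by (simp only: scv_diff)
    also have "\<dots> = \<phi> c - \<phi> c'" unfolding \<phi>_def by (rule sum_subtractf)
    also have "\<dots> = 0" using e by (simp only: diff_self)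
    finally have z: "(\<Sum>b\<in>B. scv (c b - c' b) b) = 0" .
    have all: "\<forall>b\<in>B. c b - c' b = 0"
    proof (rule ccontr)
      assume "\<not> (\<forall>b\<in>B. c b - c' b = 0)"
      then have "\<exists>v\<in>B. c v - c' v \<noteq> 0" by blast
      then have "\<exists>u. (\<exists>v\<in>B. u v \<noteq> 0) \<and> (\<Sum>v\<in>B. scv (u v) v) = 0"
        using z by (intro exI[of _ "\<lambda>v. c v - c' v"]) simp
      then have "module.dependent scv B"
        using module.dependent_finite[OF mod_scv finB] by blast
      then show False using B(2) by simp
    qed
    show "c = c'"
    proof (rule PiE_ext[OF c c'])
      fix b assume "b \<in> B" then show "c b = c' b" using all by simp
    qed
  qed
  have img: "\<phi> ` ?P \<subseteq> W"
  proof
    fix v assume "v \<in> \<phi> ` ?P"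
    then obtain c where v: "v = \<phi> c" by blast
    have "\<And>b. b \<in> B \<Longrightarrow> scv (c b) b \<in> W"
      using B(1) module.subspace_scale[OF mod_scv sub] by blast
    then show "v \<in> W" unfolding v \<phi>_def
      by (rule module.subspace_sum[OF mod_scv sub])
  qed
  have "card ?P \<le> card W" by (rule card_inj_on_le[OF inj img fin])
  then show ?thesis using cardP B(4) by simp
qed

lemma B0_split:
  fixes x y :: "nat \<Rightarrow> 'a::field"
  shows "B0 n x y = (\<Sum>i=1..n+1. x i * y (2*n+3-i) + x (2*n+3-i) * y i)"
proof -
  have sp: "{1..2*n+2} = {1..n+1} \<union> {n+2..2*n+2}" by auto
  have "B0 n x y = (\<Sum>i=1..n+1. x i * y (2*n+3-i)) + (\<Sum>i=n+2..2*n+2. x i * y (2*n+3-i))"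
    unfolding B0_def sp by (rule sum.union_disjoint) auto
  also have "(\<Sum>i=n+2..2*n+2. x i * y (2*n+3-i)) = (\<Sum>i=1..n+1. x (2*n+3-i) * y i)"
    by (rule sum.reindex_bij_witness[where i="\<lambda>i. 2*n+3-i" and j="\<lambda>i. 2*n+3-i"]) auto
  finally show ?thesis by (simp add: sum.distrib)
qed

lemma polar:
  fixes x y :: "nat \<Rightarrow> 'a::field"
  assumes two: "(2::'a) = 0"
  shows "Qform n \<delta> \<mu> (x + y) = Qform n \<delta> \<mu> x + Qform n \<delta> \<mu> y + B0 n x y
           + \<mu> * (x (2*n) * y (2*n+1) + x (2*n+1) * y (2*n))"
proof -
  define C where "C = (\<Sum>i=2..n+1. x i * y (2*n+3-i) + x (2*n+3-i) * y i)"
  define Sx where "Sx = (\<Sum>i=2..n+1. x i * x (2*n+3-i))"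
  define Sy where "Sy = (\<Sum>i=2..n+1. y i * y (2*n+3-i))"
  have s: "(\<Sum>i=2..n+1. (x+y) i * (x+y) (2*n+3-i)) = Sx + Sy + C"
    unfolding C_def Sx_def Sy_def sum.distrib[symmetric] by (rule sum.cong) (simp_all add: algebra_simps)
  have b: "B0 n x y = x 1 * y (2*n+2) + x (2*n+2) * y 1 + C"
  proof -
    have "{1..n+1} = insert 1 {2..n+1}" by auto
    then show ?thesis unfolding B0_split C_def by simp
  qed
  have sq: "(a + b)^2 = a^2 + b^2" for a b :: 'a
    by (simp add: power2_sum two)
  have tw: "a + a = 0" for a :: 'a
    by (metis mult_2 two mult_zero_left)
  have Qx: "Qform n \<delta> \<mu> x = x 1 ^ 2 + x 1 * x (2*n+2) + \<delta> * x (2*n+2) ^ 2 + Sx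
     + \<mu> * (x (2*n) ^ 2 + x (2*n) * x (2*n+1) + \<delta> * x (2*n+1) ^ 2)"
    unfolding Qform_def Sx_def ..
  have Qy: "Qform n \<delta> \<mu> y = y 1 ^ 2 + y 1 * y (2*n+2) + \<delta> * y (2*n+2) ^ 2 + Sy
     + \<mu> * (y (2*n) ^ 2 + y (2*n) * y (2*n+1) + \<delta> * y (2*n+1) ^ 2)"
    unfolding Qform_def Sy_def ..
  have Qxy: "Qform n \<delta> \<mu> (x + y) = (x 1 + y 1) ^ 2 + (x 1 + y 1) * (x (2*n+2) + y (2*n+2))
     + \<delta> * (x (2*n+2) + y (2*n+2)) ^ 2 + (Sx + Sy + C)
     + \<mu> * ((x (2*n) + y (2*n)) ^ 2 + (x (2*n) + y (2*n)) * (x (2*n+1) + y (2*n+1)) + \<delta> * (x (2*n+1) + y (2*n+1)) ^ 2)"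
    unfolding Qform_def s[symmetric] by simp
  show ?thesis
    unfolding Qxy Qx Qy b sq
    by (simp add: algebra_simps)
qed

lemma sumsplit:
  fixes f :: "nat \<Rightarrow> 'a::comm_monoid_add"
  shows "(\<Sum>i=2..m+3. f i) = f 2 + f 3 + (\<Sum>i<m. f (4+i))"
proof -
  have "{2..m+3} = insert 2 (insert 3 {4..m+3})" by auto
  then have "(\<Sum>i=2..m+3. f i) = f 2 + (f 3 + (\<Sum>i=4..m+3. f i))" by simp
  also have "(\<Sum>i=4..m+3. f i) = (\<Sum>i<m. f (4+i))"
    by (rule sum.reindex_bij_witness[where i="\<lambda>i. 4 + i" and j="\<lambda>i. i - 4"]) auto
  finally show ?thesis by (simp add: add.assoc)
qed

lemma card_ge2: "2 \<le> card (UNIV :: 'a::{finite,field} set)"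
proof -
  have "card {0::'a, 1} = 2" by simp
  moreover have "card {0::'a, 1} \<le> card (UNIV :: 'a set)" by (rule card_mono) auto
  ultimately show ?thesis by simp
qed

lemma key:
  fixes W :: "(nat \<Rightarrow> 'a::{finite,field}) set" and \<delta> \<mu> :: 'a
  assumes two: "(2::'a) = 0" and n2: "n \<ge> 2"
    and an: "\<And>a b. a^2 + a*b + \<delta>*b^2 = 0 \<Longrightarrow> a = 0 \<and> b = 0"
    and mu: "\<mu> \<noteq> 0" and gen: "generator n \<delta> \<mu> W" and iso: "totally_isotropic_B0 n W"
  shows "\<exists>r\<in>W. r \<noteq> 0 \<and> (\<forall>j. j \<noteq> 2 \<and> j \<noteq> 3 \<longrightarrow> r j = 0)"
proof (rule ccontr)
  assume "\<not> ?thesis"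
  then have noR: "\<And>r. r \<in> W \<Longrightarrow> (\<forall>j. j \<noteq> 2 \<and> j \<noteq> 3 \<longrightarrow> r j = 0) \<Longrightarrow> r = 0" by blast
  have amb: "W \<subseteq> ambient n" and sub: "module.subspace scv W" and dimW: "vector_space.dim scv W = n"
    and Qz: "\<forall>v\<in>W. Qform n \<delta> \<mu> v = 0"
    using gen unfolding generator_def proj_subspace_def by auto
  have finW: "finite W" using amb finite_ambient by (rule finite_subset)
  have clW: "\<forall>x\<in>W. \<forall>y\<in>W. x - y \<in> W" using module.subspace_diff[OF mod_scv sub] by blast
  have addW: "\<And>x y. x \<in> W \<Longrightarrow> y \<in> W \<Longrightarrow> x + y \<in> W" using module.subspace_add[OF mod_scv sub] by blast
  have pol: "x (2*n) * y (2*n+1) + x (2*n+1) * y (2*n) = 0" if x: "x \<in> W" and y: "y \<in> W" for x y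
  proof -
    have "Qform n \<delta> \<mu> (x+y) = 0" using Qz addW[OF x y] by blast
    moreover have "Qform n \<delta> \<mu> x = 0" "Qform n \<delta> \<mu> y = 0" using Qz x y by blast+
    moreover have "B0 n x y = 0" using iso x y unfolding totally_isotropic_B0_def by blast
    ultimately have "\<mu> * (x (2*n) * y (2*n+1) + x (2*n+1) * y (2*n)) = 0"
      using polar[OF two, of n \<delta> \<mu> x y] by simp
    then show ?thesis using mu by simp
  qed
  define K where "K = {x\<in>W. x (2*n) = 0 \<and> x (2*n+1) = 0}"
  have KW: "K \<subseteq> W" unfolding K_def by blast
  have step1: "card W \<le> card (UNIV::'a set) * card K"
  proof (cases "\<forall>x\<in>W. x (2*n) = 0")
    case True
    have "card W \<le> card ((\<lambda>x. x (2*n+1)) ` W) * card {x\<in>W. x (2*n+1) = 0}"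
      by (rule fiber_bound[OF finW clW]) simp
    also have "{x\<in>W. x (2*n+1) = 0} = K" using True unfolding K_def by blast
    also have "card ((\<lambda>x. x (2*n+1)) ` W) * card K \<le> card (UNIV::'a set) * card K"
      by (rule mult_right_mono) (rule card_img_le, simp)
    finally show ?thesis .
  next
    case False
    then obtain xs where xs: "xs \<in> W" "xs (2*n) \<noteq> 0" by blast
    have "card W \<le> card ((\<lambda>x. x (2*n)) ` W) * card {x\<in>W. x (2*n) = 0}"
      by (rule fiber_bound[OF finW clW]) simp
    also have "{x\<in>W. x (2*n) = 0} = K"
    proof
      show "{x\<in>W. x (2*n) = 0} \<subseteq> K"
      proof
        fix x assume x: "x \<in> {x\<in>W. x (2*n) = 0}"
        then have "x (2*n+1) * xs (2*n) = 0" using pol[of x xs] xs(1) by simp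
        then have "x (2*n+1) = 0" using xs(2) by simp
        then show "x \<in> K" using x unfolding K_def by blast
      qed
      show "K \<subseteq> {x\<in>W. x (2*n) = 0}" unfolding K_def by blast
    qed
    also have "card ((\<lambda>x. x (2*n)) ` W) * card K \<le> card (UNIV::'a set) * card K"
      by (rule mult_right_mono) (rule card_img_le, simp)
    finally show ?thesis .
  qed
  obtain m where nm: "n = m + 2" using n2 by (metis le_add_diff_inverse2)
  define e where "e x = (\<lambda>j. if j = 0 then x 1 else if j = 1 then x (2*n+2) else
      if j < 2*m+2 then (if even j then x (4 + (j-2) div 2) else x (2*n-1-(j-2) div 2)) else 0)"
    for x :: "nat \<Rightarrow> 'a"
  have e_diff: "e (x - y) = e x - e y" for x y unfolding e_def by (rule ext) simp
  have e_even: "e x (2*i+2) = x (4+i)" if "i < m" for x i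
  proof -
    have "(2*i+2-2) div 2 = i" by simp
    then show ?thesis unfolding e_def using that by simp
  qed
  have e_odd: "e x (2*i+3) = x (2*n-1-i)" if "i < m" for x i
  proof -
    have "(2*i+3-2) div 2 = i" by simp
    moreover have "\<not> even (2*i+3)" by simp
    ultimately show ?thesis unfolding e_def using that by simp
  qed
  have e_0: "e x 0 = x 1" for x unfolding e_def by simp
  have e_1: "e x 1 = x (2*n+2)" for x unfolding e_def by simp
  have e_big: "e x j = 0" if "j \<ge> 2*m+2" for x j unfolding e_def using that by simp
  have Qe_e: "Qe \<delta> m (e x) = Qform n \<delta> \<mu> x" if x: "x \<in> K" for x
  proof -
    have x0: "x (2*n) = 0" "x (2*n+1) = 0" using x unfolding K_def by auto
    have "(\<Sum>i<m. e x (2*i+2) * e x (2*i+3)) = (\<Sum>i<m. x (4+i) * x (2*n+3-(4+i)))"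
    proof (rule sum.cong)
      fix i assume "i \<in> {..<m}"
      then have i: "i < m" by simp
      have "2*n+3-(4+i) = 2*n-1-i" using nm by simp
      then show "e x (2*i+2) * e x (2*i+3) = x (4+i) * x (2*n+3-(4+i))"
        using e_even[OF i] e_odd[OF i] by simp
    qed simp
    also have "\<dots> = (\<Sum>i=2..n+1. x i * x (2*n+3-i))"
    proof -
      have eqset: "{2..n+1} = {2..m+3}" using nm by simp
      have spl: "(\<Sum>i\<in>{2..m+3}. x i * x (2*n+3-i)) = x 2 * x (2*n+3-2) + x 3 * x (2*n+3-3) + (\<Sum>i<m. x (4+i) * x (2*n+3-(4+i)))"
        by (rule sumsplit)
      have a: "2*n+3-2 = 2*n+1" "2*n+3-3 = 2*n" by simp_all
      show ?thesis by (simp only: eqset spl a x0 mult_zero_right add_0)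
    qed
    finally show ?thesis unfolding Qe_def Qform_def e_0 e_1 using x0 by simp
  qed
  have injK: "inj_on e K"
  proof (rule inj_onI)
    fix x y assume x: "x \<in> K" and y: "y \<in> K" and exy: "e x = e y"
    define d where "d = x - y"
    have dW: "d \<in> W" using x y KW clW unfolding d_def by blast
    have dK: "d (2*n) = 0" "d (2*n+1) = 0" using x y unfolding K_def d_def by auto
    have ed: "e d = 0" unfolding d_def e_diff exy by simp
    have damb: "d \<in> ambient n" using dW amb by blast
    have "\<forall>j. j \<noteq> 2 \<and> j \<noteq> 3 \<longrightarrow> d j = 0"
    proof (intro allI impI)
      fix j :: nat assume j: "j \<noteq> 2 \<and> j \<noteq> 3"
      have outside: "d j = 0" if "j \<notin> {1..2*n+2}" using damb that unfolding ambient_def by blast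
      consider "j = 0" | "j = 1" | "4 \<le> j \<and> j \<le> m+3" | "m+4 \<le> j \<and> j \<le> 2*m+3"
        | "j = 2*n" | "j = 2*n+1" | "j = 2*n+2" | "j > 2*n+2"
        using j nm by atomize_elim presburger
      then show "d j = 0"
      proof cases
        case 1 then show ?thesis using outside by simp
      next
        case 2 then show ?thesis using fun_cong[OF ed, of 0] e_0[of d] by simp
      next
        case 3
        then have i: "j - 4 < m" and jj: "4 + (j-4) = j" by auto
        show ?thesis using fun_cong[OF ed, of "2*(j-4)+2"] e_even[OF i, of d] jj by simp
      next
        case 4
        then have i: "2*m+3-j < m" and jj: "2*n-1-(2*m+3-j) = j" using nm by auto
        show ?thesis using fun_cong[OF ed, of "2*(2*m+3-j)+3"] e_odd[OF i, of d] jj by simp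
      next
        case 5 then show ?thesis using dK by simp
      next
        case 6 then show ?thesis using dK by simp
      next
        case 7 then show ?thesis using fun_cong[OF ed, of 1] e_1[of d] by simp
      next
        case 8 then show ?thesis using outside by simp
      qed
    qed
    then have "d = 0" using noR dW by blast
    then show "x = y" unfolding d_def by simp
  qed
  have finK: "finite K" using finW KW by (rule rev_finite_subset)
  have "card K = card (e ` K)" using injK by (simp add: card_image)
  also have "card (e ` K) \<le> card (UNIV :: 'a set) ^ m"
  proof (rule ell_bound[of \<delta> "e ` K" m])
    show "\<And>a b. a^2 + a*b + \<delta>*b^2 = 0 \<Longrightarrow> a = 0 \<and> b = 0" by (rule an)
    show "finite (e ` K)" using finK by simp
    show "\<forall>x\<in>e ` K. \<forall>y\<in>e ` K. x - y \<in> e ` K"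
    proof clarify
      fix x y assume x: "x \<in> K" and y: "y \<in> K"
      have "x - y \<in> K" using x y clW unfolding K_def by auto
      then show "e x - e y \<in> e ` K" unfolding e_diff[symmetric] by blast
    qed
    show "\<forall>x\<in>e ` K. \<forall>j\<ge>2*m+2. x j = 0" using e_big by blast
    show "\<forall>x\<in>e ` K. Qe \<delta> m x = 0"
    proof clarify
      fix x assume x: "x \<in> K"
      show "Qe \<delta> m (e x) = 0" using Qe_e[OF x] Qz x KW by auto
    qed
  qed
  finally have cK: "card K \<le> card (UNIV :: 'a set) ^ m" .
  have low: "card (UNIV::'a set) ^ n \<le> card W" using lowcard[OF sub finW] dimW by simp
  let ?q = "card (UNIV::'a set)"
  have q2: "?q \<ge> 2" by (rule card_ge2)
  have "?q ^ n = ?q * ?q * ?q ^ m" using nm by (simp add: power_add power2_eq_square mult_ac)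
  moreover have "card W \<le> ?q * ?q ^ m" using step1 cK by (meson le_trans mult_le_mono2)
  moreover have "?q * ?q ^ m < ?q * ?q * ?q ^ m" using q2 by simp
  ultimately show False using low by linarith
qed

theorem mainTheorem10:
  fixes n :: nat and \<delta> \<mu> :: "'a::{finite,field}"
    and F :: "(nat \<Rightarrow> 'a) set set"
  assumes q_even: "even (card (UNIV :: 'a set))"
    and n_ge: "n \<ge> 2"
    and delta_irred: "irreducible [:\<delta>, 1, 1:]"
    and mu_nz: "\<mu> \<noteq> 0"
    and gens: "\<forall>W\<in>F. generator n \<delta> \<mu> W \<and> totally_isotropic_B0 n W"
    and disj: "\<forall>W1\<in>F. \<forall>W2\<in>F. W1 \<noteq> W2 \<longrightarrow> W1 \<inter> W2 = {0}"
  shows "finite F \<and> card F \<le> card (UNIV :: 'a set) + 1"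
proof -
  have two: "(2::'a) = 0" using char2[OF q_even] by (metis one_add_one)
  have an: "\<And>a b. a^2 + a*b + \<delta>*b^2 = 0 \<Longrightarrow> a = 0 \<and> b = 0" using aniso[OF delta_irred] by blast
  have ex: "\<forall>W\<in>F. \<exists>r\<in>W. r \<noteq> 0 \<and> (\<forall>j. j \<noteq> 2 \<and> j \<noteq> 3 \<longrightarrow> r j = 0)"
    using key[OF two n_ge an mu_nz] gens by blast
  then obtain r where r: "\<And>W. W \<in> F \<Longrightarrow> r W \<in> W \<and> r W \<noteq> 0 \<and> (\<forall>j. j \<noteq> 2 \<and> j \<noteq> 3 \<longrightarrow> r W j = 0)"
    by metis
  define nv where "nv v = (if v 2 \<noteq> 0 then scv (inverse (v 2)) v else scv (inverse (v 3)) v)"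
    for v :: "nat \<Rightarrow> 'a"
  define p where "p t = (\<lambda>i::nat. if i = 2 then 1 else if i = 3 then t else (0::'a))" for t :: 'a
  define p3 where "p3 = (\<lambda>i::nat. if i = 3 then 1 else (0::'a))"
  define P where "P = insert p3 (range p)"
  have nvP: "nv v \<in> P" if v0: "v \<noteq> 0" and vs: "\<forall>j. j \<noteq> 2 \<and> j \<noteq> 3 \<longrightarrow> v j = 0" for v
  proof (cases "v 2 = 0")
    case False
    have "nv v = p (v 3 / v 2)"
    proof
      fix i show "nv v i = p (v 3 / v 2) i"
        using False vs unfolding nv_def p_def scv_def by (auto simp: field_simps)
    qed
    then show ?thesis unfolding P_def by simp
  next
    case True
    have "v 3 \<noteq> 0"
    proof
      assume "v 3 = 0"
      then have "v = 0" using True vs by (intro ext) (metis zero_fun_apply)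
      then show False using v0 by simp
    qed
    have "nv v = p3"
    proof
      fix i show "nv v i = p3 i"
        using True \<open>v 3 \<noteq> 0\<close> vs unfolding nv_def p3_def scv_def
        by (cases "i = 2"; cases "i = 3") auto
    qed
    then show ?thesis unfolding P_def by simp
  qed
  have Pnz: "w \<noteq> 0" if "w \<in> P" for w
  proof -
    have "w 2 \<noteq> 0 \<or> w 3 \<noteq> 0" using that unfolding P_def p_def p3_def by auto
    then show ?thesis by auto
  qed
  define g where "g W = nv (r W)" for W
  have gW: "g W \<in> W" if W: "W \<in> F" for W
  proof -
    have sub: "module.subspace scv W" using gens W unfolding generator_def proj_subspace_def by blast
    show ?thesis unfolding g_def nv_def using module.subspace_scale[OF mod_scv sub] r[OF W] by simp
  qed
  have gP: "g W \<in> P" if W: "W \<in> F" for W unfolding g_def using nvP r[OF W] by blast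
  have inj: "inj_on g F"
  proof (rule inj_onI)
    fix W1 W2 assume W1: "W1 \<in> F" and W2: "W2 \<in> F" and e: "g W1 = g W2"
    show "W1 = W2"
    proof (rule ccontr)
      assume "W1 \<noteq> W2"
      then have "W1 \<inter> W2 = {0}" using disj W1 W2 by blast
      moreover have "g W1 \<in> W1 \<inter> W2" using gW[OF W1] gW[OF W2] e by simp
      ultimately have "g W1 = 0" by blast
      then show False using Pnz[OF gP[OF W1]] by simp
    qed
  qed
  have finP: "finite P" unfolding P_def by simp
  have sub: "g ` F \<subseteq> P" using gP by blast
  have finF: "finite F" by (rule inj_on_finite[OF inj sub finP])
  have "card F \<le> card P" by (rule card_inj_on_le[OF inj sub finP])
  also have "card P \<le> card (range p) + 1" unfolding P_def by (simp add: card_insert_if)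
  also have "card (range p) \<le> card (UNIV :: 'a set)" by (rule card_image_le) simp
  finally show ?thesis using finF by simp
qed

end
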